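(* It is not true that $\lim_{n\to\infty} M(n+1)/M(n) = 2$.
   Context: For a positive integer $n$, $M(n)$ denotes the number of permutations $(t_1,\dots,t_n)$ of $\{1,2,\ldots,n\}$ that do not contain a 3-term arithmetic progression as a subsequence. Here a sequence contains a 3-term arithmetic progression as a subsequence if there are indices $i<j<k$ with $t_j - t_i = t_k - t_j \neq 0$; the common difference may be positive or negative. *)

theory Defs
  imports Complex_Main
begin

definition has_3AP :: "nat list \<Rightarrow> bool" where
  "has_3AP xs \<longleftrightarrow> (\<exists>i j k. i < j \<and> j < k \<and> k < length xs \<and>
      int (xs ! j) - int (xs ! i) = int (xs ! k) - int (xs ! j) \<and>
      int (xs ! j) - int (xs ! i) \<noteq> 0)"

definition perms_of :: "nat \<Rightarrow> nat list set" where
  "perms_of n = {xs. distinct xs \<and> set xs = {1..n}}"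

definition M :: "nat \<Rightarrow> nat" where
  "M n = card {xs \<in> perms_of n. \<not> has_3AP xs}"

end

theory Submission imports Defs begin
lemma has_3AP_bounded: "has_3AP xs \<longleftrightarrow> (\<exists>k\<in>{..<length xs}. \<exists>j\<in>{..<k}. \<exists>i\<in>{..<j}.
      int (xs ! j) - int (xs ! i) = int (xs ! k) - int (xs ! j) \<and>
      int (xs ! j) - int (xs ! i) \<noteq> 0)"
  unfolding has_3AP_def by (auto simp: Bex_def; meson order.strict_trans)

lemma perms_length: "xs \<in> perms_of n \<Longrightarrow> length xs = n"
  unfolding perms_of_def by (metis (mono_tags) card_atLeastAtMost diff_Suc_1 distinct_card mem_Collect_eq)

lemma finA: "finite {xs \<in> perms_of n. \<not> has_3AP xs}"
proof -
  have "{xs \<in> perms_of n. \<not> has_3AP xs} \<subseteq> {xs. set xs \<subseteq> {1..n} \<and> length xs = n}"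
    using perms_length unfolding perms_of_def by auto
  moreover have "finite {xs. set xs \<subseteq> {1..n} \<and> length xs = n}"
    by (rule finite_lists_length_eq) simp
  ultimately show ?thesis by (rule finite_subset)
qed

lemma append_free:
  assumes "\<not> has_3AP xs" "\<not> has_3AP ys" "\<forall>x\<in>set xs. \<forall>y\<in>set ys. odd (x + y)"
  shows "\<not> has_3AP (xs @ ys)"
proof
  assume "has_3AP (xs @ ys)"
  then obtain i j k where ijk: "i < j" "j < k" "k < length (xs @ ys)"
    and eq: "int ((xs@ys) ! j) - int ((xs@ys) ! i) = int ((xs@ys) ! k) - int ((xs@ys) ! j)"
    and ne: "int ((xs@ys) ! j) - int ((xs@ys) ! i) \<noteq> 0"
    unfolding has_3AP_def by blast
  show False
  proof (cases "k < length xs")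
    case True
    then have "has_3AP xs" unfolding has_3AP_def using ijk eq ne
      by (intro exI[of _ i] exI[of _ j] exI[of _ k]) (simp add: nth_append)
    then show False using assms by simp
  next
    case k: False
    show False
    proof (cases "i < length xs")
      case False
      let ?l = "length xs"
      have "has_3AP ys" unfolding has_3AP_def using ijk eq ne False
        by (intro exI[of _ "i - ?l"] exI[of _ "j - ?l"] exI[of _ "k - ?l"]) (auto simp: nth_append)
      then show False using assms by simp
    next
      case True
      have xi: "(xs@ys) ! i \<in> set xs" using True by (simp add: nth_append)
      have yk: "(xs@ys) ! k \<in> set ys" using k ijk by (simp add: nth_append)
      have "(xs@ys) ! i + (xs@ys) ! k = 2 * (xs@ys) ! j" using eq by linarith
      then show False using assms(3) xi yk by (metis even_mult_iff even_numeral)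
    qed
  qed
qed

lemma map_double_free: "\<not> has_3AP a \<Longrightarrow> \<not> has_3AP (map (\<lambda>x. 2*x) a)"
  unfolding has_3AP_def by (auto; smt (verit) of_nat_mult)

lemma map_odd_free: "\<forall>x\<in>set a. x \<ge> 1 \<Longrightarrow> \<not> has_3AP a \<Longrightarrow> \<not> has_3AP (map (\<lambda>x. 2*x - 1) a)"
proof -
  assume h1: "\<forall>x\<in>set a. x \<ge> 1" and h2: "\<not> has_3AP a"
  show ?thesis
  proof
    assume "has_3AP (map (\<lambda>x. 2*x - 1) a)"
    then obtain i j k where ijk: "i < j" "j < k" "k < length a"
      and eq: "int (2 * a ! j - 1) - int (2 * a ! i - 1) = int (2 * a ! k - 1) - int (2 * a ! j - 1)"
      and ne: "int (2 * a ! j - 1) - int (2 * a ! i - 1) \<noteq> 0"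
      unfolding has_3AP_def by auto
    have "a ! i \<ge> 1" "a ! j \<ge> 1" "a ! k \<ge> 1" using h1 ijk by auto
    then have "int (a ! j) - int (a ! i) = int (a ! k) - int (a ! j)" "int (a ! j) - int (a ! i) \<noteq> 0"
      using eq ne by (auto simp: of_nat_diff)
    then have "has_3AP a" unfolding has_3AP_def using ijk by blast
    then show False using h2 by simp
  qed
qed


definition AA :: "nat \<Rightarrow> nat list set" where "AA n = {xs \<in> perms_of n. \<not> has_3AP xs}"

definition od :: "nat \<Rightarrow> nat" where "od x = 2*x - 1"
definition ev :: "nat \<Rightarrow> nat" where "ev x = 2*x"

lemma set_split: "od ` {1..n} \<union> ev ` {1..n} = {1..2*n}"
proof (rule set_eqI)
  fix y show "y \<in> od ` {1..n} \<union> ev ` {1..n} \<longleftrightarrow> y \<in> {1..2*n}"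
  proof
    assume "y \<in> od ` {1..n} \<union> ev ` {1..n}" then show "y \<in> {1..2*n}"
      unfolding od_def ev_def by auto
  next
    assume y: "y \<in> {1..2*n}"
    show "y \<in> od ` {1..n} \<union> ev ` {1..n}"
    proof (cases "even y")
      case True
      then have "y = ev (y div 2)" "y div 2 \<in> {1..n}" using y unfolding ev_def by auto
      then show ?thesis by blast
    next
      case False
      have "1 \<le> (y+1) div 2 \<and> (y+1) div 2 \<le> n" using y by (simp; presburger)
      moreover have "y = od ((y+1) div 2)" using False y unfolding od_def by presburger
      ultimately have "y = od ((y+1) div 2)" "(y+1) div 2 \<in> {1..n}" by auto
      then show ?thesis by blast
    qed
  qed
qed

lemma dec_od: "x \<ge> 1 \<Longrightarrow> (od x + 1) div 2 = x" unfolding od_def by simp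
lemma dec_ev: "(ev x + 1) div 2 = x" unfolding ev_def by simp

lemma perm_elems: "a \<in> perms_of n \<Longrightarrow> \<forall>x\<in>set a. x \<ge> 1"
  unfolding perms_of_def by auto

lemma dec_map_od: "\<forall>x\<in>set a. x \<ge> 1 \<Longrightarrow> map (\<lambda>y. (y+1) div 2) (map od a) = a"
  by (induction a) (auto simp: od_def)
lemma dec_map_ev: "map (\<lambda>y. (y+1) div 2) (map ev a) = a"
  by (induction a) (auto simp: ev_def)

lemma comb_in:
  assumes a: "a \<in> AA n" and b: "b \<in> AA n"
  shows "map od a @ map ev b \<in> AA (2*n)" "map ev a @ map od b \<in> AA (2*n)"
proof -
  have pa: "a \<in> perms_of n" "\<not> has_3AP a" and pb: "b \<in> perms_of n" "\<not> has_3AP b"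
    using a b unfolding AA_def by auto
  have ga: "\<forall>x\<in>set a. x \<ge> 1" and gb: "\<forall>x\<in>set b. x \<ge> 1" using pa pb perm_elems by auto
  have injod: "inj_on od S" if "\<forall>x\<in>S. x \<ge> 1" for S
    using that unfolding inj_on_def od_def by auto
  have injev: "inj ev" unfolding inj_def ev_def by auto
  have da: "distinct a" "set a = {1..n}" and db: "distinct b" "set b = {1..n}"
    using pa pb unfolding perms_of_def by auto
  have par: "odd (od x + ev y)" if "x \<ge> 1" for x y
    using that unfolding od_def ev_def by presburger
  have fa1: "\<not> has_3AP (map od a)" using map_odd_free[OF ga pa(2)] unfolding od_def by simp
  have fb1: "\<not> has_3AP (map od b)" using map_odd_free[OF gb pb(2)] unfolding od_def by simp
  have fa2: "\<not> has_3AP (map ev a)" using map_double_free[OF pa(2)] unfolding ev_def by simp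
  have fb2: "\<not> has_3AP (map ev b)" using map_double_free[OF pb(2)] unfolding ev_def by simp
  have disj: "set (map od a) \<inter> set (map ev b) = {}" "set (map ev a) \<inter> set (map od b) = {}"
    using par ga gb by (auto, metis even_add)+
  have d1: "distinct (map od a)" "distinct (map od b)"
    using injod[OF ga] injod[OF gb] da db by (auto simp: distinct_map)
  have d2: "distinct (map ev a)" "distinct (map ev b)"
    using injev da db by (auto simp: distinct_map intro: inj_on_subset[OF injev])
  have s1: "set (map od a @ map ev b) = {1..2*n}" "set (map ev a @ map od b) = {1..2*n}"
    using set_split[of n] da db by auto
  have p1: "\<forall>x\<in>set (map od a). \<forall>y\<in>set (map ev b). odd (x + y)" using par ga by auto
  have p2: "\<forall>x\<in>set (map ev a). \<forall>y\<in>set (map od b). odd (x + y)" using par gb by (auto simp: add.commute)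
  show "map od a @ map ev b \<in> AA (2*n)"
    unfolding AA_def perms_of_def
    using append_free[OF fa1 fb2 p1] d1 d2 disj s1 by auto
  show "map ev a @ map od b \<in> AA (2*n)"
    unfolding AA_def perms_of_def
    using append_free[OF fa2 fb1 p2] d1 d2 disj s1 by auto
qed


lemma M_AA: "M n = card (AA n)" unfolding M_def AA_def by simp

lemma doubling:
  assumes n: "n \<ge> 1"
  shows "2 * M n ^ 2 \<le> M (2*n)"
proof -
  define F1 where "F1 = (\<lambda>p. map od (fst p) @ map ev (snd p))"
  define F2 where "F2 = (\<lambda>p. map ev (fst p) @ map od (snd p))"
  let ?X = "AA n \<times> AA n"
  have finX: "finite ?X" using finA[of n] unfolding AA_def by simp
  have lenA: "length a = n" if "a \<in> AA n" for a using that perms_length unfolding AA_def by auto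
  have geA: "\<forall>x\<in>set a. x \<ge> 1" if "a \<in> AA n" for a using that perm_elems unfolding AA_def by auto
  have inj1: "inj_on F1 ?X"
  proof (rule inj_onI)
    fix p q assume p: "p \<in> ?X" and q: "q \<in> ?X" and e: "F1 p = F1 q"
    have "take n (F1 p) = map od (fst p)" "drop n (F1 p) = map ev (snd p)"
         "take n (F1 q) = map od (fst q)" "drop n (F1 q) = map ev (snd q)"
      using p q lenA unfolding F1_def by auto
    then have "map od (fst p) = map od (fst q)" "map ev (snd p) = map ev (snd q)" using e by metis+
    then have "fst p = fst q" "snd p = snd q"
      using dec_map_od[OF geA[of "fst p"]] dec_map_od[OF geA[of "fst q"]] dec_map_ev[of "snd p"] dec_map_ev[of "snd q"] p q
      by (metis mem_Times_iff)+
    then show "p = q" by (simp add: prod_eq_iff)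
  qed
  have inj2: "inj_on F2 ?X"
  proof (rule inj_onI)
    fix p q assume p: "p \<in> ?X" and q: "q \<in> ?X" and e: "F2 p = F2 q"
    have "take n (F2 p) = map ev (fst p)" "drop n (F2 p) = map od (snd p)"
         "take n (F2 q) = map ev (fst q)" "drop n (F2 q) = map od (snd q)"
      using p q lenA unfolding F2_def by auto
    then have "map ev (fst p) = map ev (fst q)" "map od (snd p) = map od (snd q)" using e by metis+
    then have "fst p = fst q" "snd p = snd q"
      using dec_map_od[OF geA[of "snd p"]] dec_map_od[OF geA[of "snd q"]] dec_map_ev[of "fst p"] dec_map_ev[of "fst q"] p q
      by (metis mem_Times_iff)+
    then show "p = q" by (simp add: prod_eq_iff)
  qed
  have disj: "F1 ` ?X \<inter> F2 ` ?X = {}"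
  proof (rule ccontr)
    assume "F1 ` ?X \<inter> F2 ` ?X \<noteq> {}"
    then obtain p q where p: "p \<in> ?X" and q: "q \<in> ?X" and e: "F1 p = F2 q" by blast
    obtain x xs where px: "fst p = x # xs" using lenA[of "fst p"] p n by (cases "fst p") auto
    obtain y ys where qy: "fst q = y # ys" using lenA[of "fst q"] q n by (cases "fst q") auto
    have "x \<ge> 1" using geA[of "fst p"] p px by auto
    have "od x = ev y" using e px qy unfolding F1_def F2_def by simp
    then show False using \<open>x \<ge> 1\<close> unfolding od_def ev_def by presburger
  qed
  have sub: "F1 ` ?X \<union> F2 ` ?X \<subseteq> AA (2*n)"
    using comb_in unfolding F1_def F2_def by auto
  have "card (F1 ` ?X \<union> F2 ` ?X) = card ?X + card ?X"
    using card_Un_disjoint[OF finite_imageI[OF finX] finite_imageI[OF finX] disj]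
      card_image[OF inj1] card_image[OF inj2] by simp
  also have "card ?X = M n ^ 2" by (simp add: card_cartesian_product M_AA power2_eq_square)
  finally have "card (F1 ` ?X \<union> F2 ` ?X) = 2 * M n ^ 2" by simp
  moreover have "card (F1 ` ?X \<union> F2 ` ?X) \<le> card (AA (2*n))"
    using card_mono[OF _ sub] finA[of "2*n"] unfolding AA_def by simp
  ultimately show ?thesis by (simp add: M_AA)
qed


lemma M4: "M 4 \<ge> 10"
proof -
  let ?S = "{[1,3,2,4],[1,3,4,2],[2,1,4,3],[2,4,1,3],[2,4,3,1],[3,1,2,4],[3,1,4,2],[3,4,1,2],[4,2,1,3],[4,2,3,1]} :: nat list set"
  have e: "{Suc 0..4::nat} = {Suc 0,2,3,4}" by auto
  have sub: "?S \<subseteq> {xs \<in> perms_of 4. \<not> has_3AP xs}"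
    unfolding perms_of_def has_3AP_bounded by (simp add: lessThan_nat_numeral lessThan_Suc insert_commute e)
  hence "card ?S \<le> M 4" unfolding M_def using finA card_mono by blast
  moreover have "card ?S = 10" by simp
  ultimately show ?thesis by simp
qed

lemma lower: "(20::real) ^ (2^k) \<le> 2 * real (M (4 * 2^k))"
proof (induction k)
  case 0 then show ?case using M4 by simp
next
  case (Suc k)
  have "(20::real) ^ (2^Suc k) = (20 ^ (2^k))^2" by (simp add: power_mult[symmetric] mult.commute)
  also have "\<dots> \<le> (2 * real (M (4 * 2^k)))^2"
    using Suc.IH by (intro power_mono) auto
  also have "\<dots> = 2 * real (2 * M (4 * 2^k) ^ 2)" by (simp add: power2_eq_square)
  also have "\<dots> \<le> 2 * real (M (2 * (4 * 2^k)))"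
  proof -
    have d: "2 * M (4*2^k)^2 \<le> M (2*(4*2^k))" by (rule doubling) simp
    have "real (2 * M (4*2^k)^2) \<le> real (M (2*(4*2^k)))" using d by (simp only: of_nat_le_iff)
    then show ?thesis by linarith
  qed
  also have "2 * (4 * 2^k) = (4 * 2 ^ Suc k :: nat)" by simp
  finally show ?case .
qed

theorem mainTheorem2:
  shows "\<not> ((\<lambda>n. real (M (n + 1)) / real (M n)) \<longlonglongrightarrow> 2)"
proof
  assume L: "(\<lambda>n. real (M (n + 1)) / real (M n)) \<longlonglongrightarrow> 2"
  have "\<forall>\<^sub>F n in sequentially. dist (real (M (n + 1)) / real (M n)) 2 < 1/20"
    by (rule tendstoD[OF L]) simp
  then obtain N where N: "\<And>n. n \<ge> N \<Longrightarrow> \<bar>real (M (n + 1)) / real (M n) - 2\<bar> < 1/20"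
    unfolding eventually_sequentially dist_real_def by blast
  define r :: real where "r = 41/20"
  have step: "real (M (n+1)) \<le> r * real (M n)" if "n \<ge> N" for n
  proof -
    have h: "\<bar>real (M (n + 1)) / real (M n) - 2\<bar> < 1/20" using N that by blast
    have pos: "real (M n) > 0"
    proof (rule ccontr)
      assume "\<not> real (M n) > 0" then have "real (M n) = 0" by simp
      then show False using h by simp
    qed
    have "real (M (n + 1)) / real (M n) - 2 < 1/20" using h unfolding abs_less_iff by linarith
    then have "real (M (n + 1)) / real (M n) \<le> r" unfolding r_def by linarith
    then show ?thesis using pos by (simp add: divide_le_eq mult.commute)
  qed
  define C where "C = real (M N)"
  have C0: "C \<ge> 0" unfolding C_def by simp
  have up: "real (M (N + m)) \<le> C * r ^ m" for m
  proof (induction m)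
    case 0 then show ?case unfolding C_def by simp
  next
    case (Suc m)
    have "real (M (N + Suc m)) \<le> r * real (M (N + m))" using step[of "N+m"] by simp
    also have "\<dots> \<le> r * (C * r ^ m)" using Suc.IH unfolding r_def by simp
    finally show ?case by (simp add: algebra_simps)
  qed
  define k where "k = N + nat (ceiling (16 * C)) + 1"
  define t :: nat where "t = 2 ^ k"
  have tk: "k < t" unfolding t_def by simp
  have tN: "N \<le> 4 * t" using tk unfolding k_def by simp
  have t16: "real t > 16 * C"
  proof -
    have "16 * C \<le> real (nat (ceiling (16 * C)))" by linarith
    also have "\<dots> < real k" unfolding k_def by simp
    also have "\<dots> < real t" using tk by simp
    finally show ?thesis .
  qed
  have r1: "r \<ge> 1" unfolding r_def by simp
  have "real (M (4 * t)) = real (M (N + (4*t - N)))" using tN by simp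
  also have "\<dots> \<le> C * r ^ (4*t - N)" by (rule up)
  also have "\<dots> \<le> C * r ^ (4*t)" using r1 C0 by (intro mult_left_mono power_increasing) auto
  finally have ub: "real (M (4 * t)) \<le> C * (r^4) ^ t" by (simp add: power_mult)
  have lb: "(20::real) ^ t \<le> 2 * real (M (4 * t))" using lower[of k] unfolding t_def by simp
  define q :: real where "q = 1/8"
  have r4: "r^4 * (1 + q) \<le> 20" unfolding r_def q_def by (simp add: power_divide)
  have r4p: "r^4 > 0" unfolding r_def by simp
  have "(r^4)^t * (1 + q)^t \<le> 20^t"
    using r4 r4p unfolding q_def power_mult_distrib[symmetric] by (intro power_mono) auto
  also have "\<dots> \<le> 2 * C * (r^4)^t" using lb ub by simp
  finally have "(r^4)^t * (1 + q)^t \<le> (r^4)^t * (2 * C)" by (simp add: mult.commute)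
  then have "(1 + q)^t \<le> 2 * C" using r4p by (simp add: mult_le_cancel_left_pos)
  moreover have "1 + real t * q \<le> (1 + q)^t" by (rule Bernoulli_inequality) (simp add: q_def)
  ultimately have "1 + real t / 8 \<le> 2 * C" unfolding q_def by simp
  then show False using t16 C0 by simp
qed

end
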